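(* Let $\mathbb{U}$ be the Urysohn space and let $\mathbf{A},\mathbf{B}\subset\mathbb{U}$ be finite. Then for every $p\in\mathrm{Iso}_{\mathbf{A}\cap\mathbf{B}}(\mathbb{U})$ and every finite $\mathbf{C}\subseteq\mathbb{U}$ there is $q\in\langle\mathrm{Iso}_{\mathbf{A}}(\mathbb{U}),\mathrm{Iso}_{\mathbf{B}}(\mathbb{U})\rangle$ such that $q(x)=p(x)$ for all $x\in\mathbf{C}$.
   Context: The Urysohn space $\mathbb{U}$ is the unique (up to isometry) complete separable metric space into which every finite metric space embeds isometrically and in which every isometry between finite subsets extends to an isometry of $\mathbb{U}$. For $\mathbf{D}\subseteq\mathbb{U}$, $\mathrm{Iso}_{\mathbf{D}}(\mathbb{U})$ is the subgroup of isometries of $\mathbb{U}$ fixing $\mathbf{D}$ pointwise; $\langle X,Y\rangle$ is the subgroup generated by $X\cup Y$. *)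

theory Defs
  imports "HOL-Analysis.Analysis"
begin

definition isometry :: "('a::metric_space \<Rightarrow> 'a) \<Rightarrow> bool" where
  "isometry f \<longleftrightarrow> bij f \<and> (\<forall>x y. dist (f x) (f y) = dist x y)"

definition Iso_fix :: "'a::metric_space set \<Rightarrow> ('a \<Rightarrow> 'a) set" where
  "Iso_fix D = {f. isometry f \<and> (\<forall>x\<in>D. f x = x)}"

inductive_set gen_group :: "('a \<Rightarrow> 'a) set \<Rightarrow> ('a \<Rightarrow> 'a) set" for S where
  gen_id: "id \<in> gen_group S"
| gen_in: "f \<in> S \<Longrightarrow> f \<in> gen_group S"
| gen_inv: "f \<in> S \<Longrightarrow> inv f \<in> gen_group S"
| gen_comp: "f \<in> gen_group S \<Longrightarrow> g \<in> gen_group S \<Longrightarrow> f \<circ> g \<in> gen_group S"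

text \<open>Finite metric spaces are
  represented (up to isometry) by metrics d on {0..<n}.\<close>
definition urysohn_space :: "'a::metric_space itself \<Rightarrow> bool" where
  "urysohn_space _ \<longleftrightarrow>
     complete (UNIV :: 'a set) \<and>
     separable_space (euclidean :: 'a topology) \<and>
     (\<forall>(n::nat) (d::nat \<Rightarrow> nat \<Rightarrow> real).
        (\<forall>i<n. \<forall>j<n. d i j \<ge> 0 \<and> (d i j = 0 \<longleftrightarrow> i = j) \<and> d i j = d j i) \<and>
        (\<forall>i<n. \<forall>j<n. \<forall>k<n. d i k \<le> d i j + d j k) \<longrightarrow>
        (\<exists>e :: nat \<Rightarrow> 'a. \<forall>i<n. \<forall>j<n. dist (e i) (e j) = d i j)) \<and>
     (\<forall>(F :: 'a set) (g :: 'a \<Rightarrow> 'a). finite F \<and> (\<forall>x\<in>F. \<forall>y\<in>F. dist (g x) (g y) = dist x y) \<longrightarrow>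
        (\<exists>h. isometry h \<and> (\<forall>x\<in>F. h x = g x)))"

end

theory Submission
  imports Defs
begin

lemma ury_univ:
  assumes "urysohn_space TYPE('a::metric_space)"
  and "\<forall>i<n. \<forall>j<n. d i j \<ge> 0 \<and> (d i j = 0 \<longleftrightarrow> i = j) \<and> d i j = d j i"
  and "\<forall>i<n. \<forall>j<n. \<forall>k<n. d i k \<le> d i j + d j k"
  shows "\<exists>e :: nat \<Rightarrow> 'a. \<forall>i<n. \<forall>j<n. dist (e i) (e j) = d i j"
  using assms unfolding urysohn_space_def by blast

lemma ury_hom:
  fixes g :: "'a::metric_space \<Rightarrow> 'a"
  assumes "urysohn_space TYPE('a)" "finite F"
   "\<forall>x\<in>F. \<forall>y\<in>F. dist (g x) (g y) = dist x y"
  shows "\<exists>h. isometry h \<and> (\<forall>x\<in>F. h x = g x)"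
  using assms unfolding urysohn_space_def by blast

lemma hom2:
  fixes f g :: "'b \<Rightarrow> 'a::metric_space"
  assumes U: "urysohn_space TYPE('a)" and fin: "finite I"
    and d: "\<And>i j. i \<in> I \<Longrightarrow> j \<in> I \<Longrightarrow> dist (g i) (g j) = dist (f i) (f j)"
  shows "\<exists>h. isometry h \<and> (\<forall>i\<in>I. h (f i) = g i)"
proof -
  define gg where "gg x = g (SOME i. i \<in> I \<and> f i = x)" for x
  have gg: "gg (f i) = g i" if "i \<in> I" for i
  proof -
    have "\<exists>j. j \<in> I \<and> f j = f i" using that by blast
    then have s: "(SOME j. j \<in> I \<and> f j = f i) \<in> I \<and> f (SOME j. j \<in> I \<and> f j = f i) = f i"
      by (rule someI_ex)
    then have "dist (g (SOME j. j \<in> I \<and> f j = f i)) (g i) = 0"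
      using d[of "SOME j. j \<in> I \<and> f j = f i" i] that by simp
    then show ?thesis unfolding gg_def by simp
  qed
  have "\<forall>x\<in>f ` I. \<forall>y\<in>f ` I. dist (gg x) (gg y) = dist x y"
    using gg d by auto
  then obtain h where "isometry h" "\<forall>x\<in>f ` I. h x = gg x"
    using ury_hom[OF U finite_imageI[OF fin]] by blast
  then show ?thesis using gg by auto
qed

lemma emb:
  fixes d :: "'b \<Rightarrow> 'b \<Rightarrow> real"
  assumes U: "urysohn_space TYPE('a::metric_space)" and fin: "finite I"
    and nn: "\<And>i j. i \<in> I \<Longrightarrow> j \<in> I \<Longrightarrow> d i j \<ge> 0"
    and refl: "\<And>i. i \<in> I \<Longrightarrow> d i i = 0"
    and sym: "\<And>i j. i \<in> I \<Longrightarrow> j \<in> I \<Longrightarrow> d i j = d j i"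
    and tri: "\<And>i j k. i \<in> I \<Longrightarrow> j \<in> I \<Longrightarrow> k \<in> I \<Longrightarrow> d i k \<le> d i j + d j k"
  shows "\<exists>e :: 'b \<Rightarrow> 'a. \<forall>i\<in>I. \<forall>j\<in>I. dist (e i) (e j) = d i j"
proof -
  define f where "f i = (SOME j. j \<in> I \<and> d i j = 0)" for i
  have f1: "f i \<in> I \<and> d i (f i) = 0" if "i \<in> I" for i
    unfolding f_def by (rule someI[of _ i]) (use that refl in auto)
  have f2: "f i = f k" if "i \<in> I" "k \<in> I" "d i k = 0" for i k
  proof -
    have "(\<lambda>j. j \<in> I \<and> d i j = 0) = (\<lambda>j. j \<in> I \<and> d k j = 0)"
    proof (rule ext, rule iffI)
      fix j assume "j \<in> I \<and> d i j = 0"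
      then show "j \<in> I \<and> d k j = 0" using tri[of k i j] sym[of k i] nn[of k j] that by auto
    next
      fix j assume "j \<in> I \<and> d k j = 0"
      then show "j \<in> I \<and> d i j = 0" using tri[of i k j] nn[of i j] that by auto
    qed
    then show ?thesis unfolding f_def by simp
  qed
  define R where "R = f ` I"
  have RI: "R \<subseteq> I" using f1 unfolding R_def by auto
  have fR: "f r = r" if "r \<in> R" for r
  proof -
    obtain i where i: "i \<in> I" "r = f i" using \<open>r \<in> R\<close> unfolding R_def by auto
    then show ?thesis using f1[OF i(1)] f2[of i "f i"] by auto
  qed
  have finR: "finite R" using fin R_def by simp
  define n where "n = card R"
  obtain h where h: "bij_betw h {0..<n} R" using ex_bij_betw_nat_finite[OF finR] n_def by blast
  define d' where "d' u v = d (h u) (h v)" for u v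
  have hR: "h u \<in> R" if "u < n" for u using h that bij_betwE by fastforce
  have cond1: "\<forall>i<n. \<forall>j<n. d' i j \<ge> 0 \<and> (d' i j = 0 \<longleftrightarrow> i = j) \<and> d' i j = d' j i"
  proof (intro allI impI conjI)
    fix i j assume ij: "i < n" "j < n"
    have hi: "h i \<in> I" "h j \<in> I" using hR ij RI by auto
    show "d' i j \<ge> 0" using nn hi d'_def by simp
    show "d' i j = d' j i" using sym hi d'_def by simp
    show "d' i j = 0 \<longleftrightarrow> i = j"
    proof
      assume "d' i j = 0"
      then have "f (h i) = f (h j)" using f2 hi d'_def by simp
      then have "h i = h j" using fR hR ij by metis
      then show "i = j" using h ij unfolding bij_betw_def inj_on_def by auto
    next
      assume "i = j" then show "d' i j = 0" using refl hi d'_def by simp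
    qed
  qed
  have cond2: "\<forall>i<n. \<forall>j<n. \<forall>k<n. d' i k \<le> d' i j + d' j k"
    using tri hR RI unfolding d'_def by (meson subsetD)
  obtain e' :: "nat \<Rightarrow> 'a" where e': "\<forall>i<n. \<forall>j<n. dist (e' i) (e' j) = d' i j"
    using ury_univ[OF U cond1 cond2] by blast
  define g where "g = the_inv_into {0..<n} h"
  have g: "g r < n \<and> h (g r) = r" if "r \<in> R" for r
  proof
    show "h (g r) = r" unfolding g_def using f_the_inv_into_f_bij_betw[OF h that] .
    have "g r \<in> {0..<n}" unfolding g_def
      using the_inv_into_into[of h "{0..<n}" r "{0..<n}"] h \<open>r \<in> R\<close> unfolding bij_betw_def by auto
    then show "g r < n" by simp
  qed
  define e where "e i = e' (g (f i))" for i
  show ?thesis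
  proof (intro exI ballI)
    fix i j assume ij: "i \<in> I" "j \<in> I"
    have fi: "f i \<in> R" "f j \<in> R" using ij R_def by auto
    have "dist (e i) (e j) = d (f i) (f j)" using e' g[OF fi(1)] g[OF fi(2)] d'_def e_def by simp
    also have "\<dots> = d i j"
    proof -
      have a: "d i (f i) = 0" "d j (f j) = 0" using f1 ij by auto
      have fiI: "f i \<in> I" "f j \<in> I" using f1 ij by auto
      have "d (f i) (f j) \<le> d (f i) i + d i (f j)" using tri fiI ij by blast
      moreover have "d i (f j) \<le> d i j + d j (f j)" using tri fiI ij by blast
      moreover have "d i j \<le> d i (f i) + d (f i) j" using tri fiI ij by blast
      moreover have "d (f i) j \<le> d (f i) (f j) + d (f j) j" using tri fiI ij by blast
      moreover have "d (f i) i = 0" "d (f j) j = 0" using a sym fiI ij by auto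
      ultimately show ?thesis using a by linarith
    qed
    finally show "dist (e i) (e j) = d i j" .
  qed
qed
lemma realize:
  fixes S :: "'a::metric_space set" and C :: "'c set" and w :: "'c \<Rightarrow> 'c \<Rightarrow> real"
    and H :: "'c \<Rightarrow> 'a \<Rightarrow> real"
  assumes U: "urysohn_space TYPE('a)" and fS: "finite S" and fC: "finite C"
   and w0: "\<And>c. c\<in>C \<Longrightarrow> w c c = 0"
   and wnn: "\<And>c c'. c\<in>C \<Longrightarrow> c'\<in>C \<Longrightarrow> w c c' \<ge> 0"
   and wsym: "\<And>c c'. c\<in>C \<Longrightarrow> c'\<in>C \<Longrightarrow> w c c' = w c' c"
   and wtri: "\<And>c c' c''. c\<in>C \<Longrightarrow> c'\<in>C \<Longrightarrow> c''\<in>C \<Longrightarrow> w c c'' \<le> w c c' + w c' c''"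
   and Hnn: "\<And>c s. c\<in>C \<Longrightarrow> s\<in>S \<Longrightarrow> H c s \<ge> 0"
   and t1: "\<And>c s s'. c\<in>C \<Longrightarrow> s\<in>S \<Longrightarrow> s'\<in>S \<Longrightarrow> dist s s' \<le> H c s + H c s'"
   and t2: "\<And>c s s'. c\<in>C \<Longrightarrow> s\<in>S \<Longrightarrow> s'\<in>S \<Longrightarrow> H c s \<le> dist s s' + H c s'"
   and t3: "\<And>c c' s. c\<in>C \<Longrightarrow> c'\<in>C \<Longrightarrow> s\<in>S \<Longrightarrow> w c c' \<le> H c s + H c' s"
   and t4: "\<And>c c' s. c\<in>C \<Longrightarrow> c'\<in>C \<Longrightarrow> s\<in>S \<Longrightarrow> H c s \<le> w c c' + H c' s"
  shows "\<exists>y. \<forall>c\<in>C. (\<forall>c'\<in>C. dist (y c) (y c') = w c c') \<and> (\<forall>s\<in>S. dist (y c) s = H c s)"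
proof -
  define dd :: "'a + 'c \<Rightarrow> 'a + 'c \<Rightarrow> real" where
    "dd x z = (case x of Inl s \<Rightarrow> (case z of Inl s' \<Rightarrow> dist s s' | Inr c \<Rightarrow> H c s)
                   | Inr c \<Rightarrow> (case z of Inl s \<Rightarrow> H c s | Inr c' \<Rightarrow> w c c'))" for x z
  define I where "I = Inl ` S \<union> Inr ` C"
  have fI: "finite I" using fS fC I_def by simp
  have tri: "dd i k \<le> dd i j + dd j k" if ijk: "i\<in>I" "j\<in>I" "k\<in>I" for i j k
  proof -
    consider (LLL) s1 s2 s3 where "i = Inl s1" "j = Inl s2" "k = Inl s3" "s1\<in>S" "s2\<in>S" "s3\<in>S"
      | (LLR) s1 s2 c3 where "i = Inl s1" "j = Inl s2" "k = Inr c3" "s1\<in>S" "s2\<in>S" "c3\<in>C"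
      | (LRL) s1 c2 s3 where "i = Inl s1" "j = Inr c2" "k = Inl s3" "s1\<in>S" "c2\<in>C" "s3\<in>S"
      | (LRR) s1 c2 c3 where "i = Inl s1" "j = Inr c2" "k = Inr c3" "s1\<in>S" "c2\<in>C" "c3\<in>C"
      | (RLL) c1 s2 s3 where "i = Inr c1" "j = Inl s2" "k = Inl s3" "c1\<in>C" "s2\<in>S" "s3\<in>S"
      | (RLR) c1 s2 c3 where "i = Inr c1" "j = Inl s2" "k = Inr c3" "c1\<in>C" "s2\<in>S" "c3\<in>C"
      | (RRL) c1 c2 s3 where "i = Inr c1" "j = Inr c2" "k = Inl s3" "c1\<in>C" "c2\<in>C" "s3\<in>S"
      | (RRR) c1 c2 c3 where "i = Inr c1" "j = Inr c2" "k = Inr c3" "c1\<in>C" "c2\<in>C" "c3\<in>C"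
      using ijk unfolding I_def by (elim UnE imageE) blast+
    then show ?thesis
    proof cases
      case LLL then show ?thesis by (simp add: dd_def dist_triangle)
    next
      case LLR then show ?thesis using t2[of c3 s1 s2] by (simp add: dd_def)
    next
      case LRL then show ?thesis using t1[of c2 s1 s3] by (simp add: dd_def)
    next
      case LRR then show ?thesis using t4[of c3 c2 s1] wsym[of c2 c3] by (simp add: dd_def)
    next
      case RLL then show ?thesis using t2[of c1 s3 s2] dist_commute[of s2 s3] by (simp add: dd_def)
    next
      case RLR then show ?thesis using t3[of c1 c3 s2] by (simp add: dd_def)
    next
      case RRL then show ?thesis using t4[of c1 c2 s3] by (simp add: dd_def)
    next
      case RRR then show ?thesis using wtri[of c1 c2 c3] by (simp add: dd_def)
    qed
  qed
  have nn: "dd i j \<ge> 0" if "i\<in>I" "j\<in>I" for i j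
    using that Hnn wnn unfolding I_def dd_def by auto
  have refl: "dd i i = 0" if "i\<in>I" for i
    using that w0 unfolding I_def dd_def by auto
  have sym: "dd i j = dd j i" if "i\<in>I" "j\<in>I" for i j
    using that wsym unfolding I_def dd_def by (auto simp: dist_commute)
  obtain e :: "'a + 'c \<Rightarrow> 'a" where e: "\<forall>i\<in>I. \<forall>j\<in>I. dist (e i) (e j) = dd i j"
    using emb[where I=I and d=dd, OF U fI nn refl sym tri] by blast
  obtain \<phi> where phi: "isometry \<phi>" "\<forall>s\<in>S. \<phi> (e (Inl s)) = s"
    using hom2[OF U fS, of "\<lambda>s. s" "\<lambda>s. e (Inl s)"] e unfolding I_def dd_def by auto
  have pd: "dist (\<phi> x) (\<phi> z) = dist x z" for x z using phi(1) unfolding isometry_def by blast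
  show ?thesis
  proof (intro exI[of _ "\<lambda>c. \<phi> (e (Inr c))"] ballI conjI)
    fix c c' assume "c\<in>C" "c'\<in>C"
    then show "dist (\<phi> (e (Inr c))) (\<phi> (e (Inr c'))) = w c c'"
      using pd e unfolding I_def dd_def by auto
  next
    fix c s assume "c\<in>C" "s\<in>S"
    then show "dist (\<phi> (e (Inr c))) s = H c s"
      using pd[of "e (Inr c)" "e (Inl s)"] phi(2) e unfolding I_def dd_def by auto
  qed
qed

definition mincap :: "real \<Rightarrow> 'a set \<Rightarrow> ('a \<Rightarrow> real) \<Rightarrow> 'a::metric_space \<Rightarrow> real" where
  "mincap M K u z = Min (insert M ((\<lambda>k. u k + dist k z) ` K))"

lemma mincap_le_M: "finite K \<Longrightarrow> mincap M K u z \<le> M"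
  unfolding mincap_def by simp

lemma mincap_le: "finite K \<Longrightarrow> k \<in> K \<Longrightarrow> mincap M K u z \<le> u k + dist k z"
  unfolding mincap_def by simp

lemma mincap_ge: "finite K \<Longrightarrow> L \<le> M \<Longrightarrow> (\<And>k. k \<in> K \<Longrightarrow> L \<le> u k + dist k z) \<Longrightarrow> L \<le> mincap M K u z"
  unfolding mincap_def by simp

lemma mincap_lip: "finite K \<Longrightarrow> mincap M K u z \<le> mincap M K u z' + dist z z'"
proof -
  assume K: "finite K"
  have "mincap M K u z - dist z z' \<le> mincap M K u z'"
  proof (rule mincap_ge[OF K])
    show "mincap M K u z - dist z z' \<le> M" using mincap_le_M[OF K, of M u z] zero_le_dist[of z z'] by linarith
    fix k assume "k \<in> K"
    then show "mincap M K u z - dist z z' \<le> u k + dist k z'"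
      using mincap_le[OF K, of k M u z] dist_triangle[of k z z'] dist_commute[of z z'] by linarith
  qed
  then show ?thesis by simp
qed

lemma isometry_inv: "isometry f \<Longrightarrow> isometry (inv f)"
  unfolding isometry_def
  by (metis bij_betw_inv_into bij_inv_eq_iff)

lemma isometry_comp: "isometry f \<Longrightarrow> isometry g \<Longrightarrow> isometry (f \<circ> g)"
  unfolding isometry_def by (auto intro: bij_comp)

lemma gen_fix: "q \<in> gen_group (Iso_fix A \<union> Iso_fix B) \<Longrightarrow> q \<in> Iso_fix (A \<inter> B)"
proof (induction rule: gen_group.induct)
  case gen_id then show ?case unfolding Iso_fix_def isometry_def by (simp add: bij_def inj_on_def)
next
  case (gen_in f) then show ?case unfolding Iso_fix_def by auto
next
  case (gen_inv f)
  then have f: "isometry f" "\<forall>x\<in>A\<inter>B. f x = x" unfolding Iso_fix_def by auto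
  then have "bij f" unfolding isometry_def by simp
  then have "\<forall>x\<in>A\<inter>B. inv f x = x" using f(2) by (metis bij_is_inj inv_f_f)
  then show ?case using isometry_inv[OF f(1)] unfolding Iso_fix_def by auto
next
  case (gen_comp f g) then show ?case unfolding Iso_fix_def using isometry_comp[of f g] by (auto simp: o_def)
qed

lemma gen_inv_closed: "q \<in> gen_group (Iso_fix A \<union> Iso_fix B) \<Longrightarrow> inv q \<in> gen_group (Iso_fix A \<union> Iso_fix B)"
proof (induction rule: gen_group.induct)
  case gen_id then show ?case by (metis inv_id gen_group.gen_id)
next
  case (gen_in f) then show ?case by (rule gen_group.gen_inv)
next
  case (gen_inv f)
  then have "bij f" unfolding Iso_fix_def isometry_def by auto
  then show ?case using gen_inv by (simp add: inv_inv_eq gen_group.gen_in)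
next
  case (gen_comp f g)
  then have "bij f" "bij g" using gen_fix unfolding Iso_fix_def isometry_def by blast+
  then show ?case using gen_comp o_inv_distrib[of f g] gen_group.gen_comp by metis
qed
lemma half_step:
  fixes A B C :: "'a::metric_space set" and y :: "'a \<Rightarrow> 'a"
  assumes U: "urysohn_space TYPE('a)" and fA: "finite A" and fB: "finite B" and fC: "finite C"
    and dl: "\<And>a b. a \<in> A - B \<Longrightarrow> b \<in> B - A \<Longrightarrow> \<delta> \<le> dist a b"
    and M1: "\<And>c c'. c\<in>C \<Longrightarrow> c'\<in>C \<Longrightarrow> dist (y c) (y c') \<le> M"
    and M2: "\<And>z z'. z \<in> A\<union>B \<Longrightarrow> z' \<in> A\<union>B \<Longrightarrow> dist z z' \<le> M"
    and M3: "\<And>c z. c\<in>C \<Longrightarrow> z\<in>A\<union>B \<Longrightarrow> dist (y c) z \<le> M"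
    and yD: "\<And>c d. c\<in>C \<Longrightarrow> d\<in>A\<inter>B \<Longrightarrow> dist (y c) d = dist c d"
    and LB: "\<And>c b. c\<in>C \<Longrightarrow> b\<in>B \<Longrightarrow> min (mincap M (A\<inter>B) (dist c) b) t \<le> dist (y c) b"
  shows "\<exists>g\<in>Iso_fix B. (\<forall>c\<in>C. \<forall>z\<in>A\<union>B. dist (g (y c)) z \<le> M) \<and>
            (\<forall>c\<in>C. \<forall>a\<in>A. min (mincap M (A\<inter>B) (dist c) a) (t+\<delta>) \<le> dist (g (y c)) a)"
proof -
  define S where "S = A \<union> B"
  have fS: "finite S" using fA fB S_def by simp
  define H where "H c z = mincap M B (\<lambda>b. dist (y c) b) z" for c z
  define w where "w c c' = dist (y c) (y c')" for c c'
  have HB: "H c b = dist (y c) b" if "c \<in> C" "b \<in> B" for c b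
  proof (rule antisym)
    show "H c b \<le> dist (y c) b" unfolding H_def using mincap_le[OF fB that(2), of M "dist (y c)" b] by simp
    show "dist (y c) b \<le> H c b" unfolding H_def
    proof (rule mincap_ge[OF fB])
      show "dist (y c) b \<le> M" using M3 that by simp
      fix k assume "k \<in> B" then show "dist (y c) b \<le> dist (y c) k + dist k b"
        using dist_triangle by blast
    qed
  qed
  obtain y' where y': "\<forall>c\<in>C. (\<forall>c'\<in>C. dist (y' c) (y' c') = w c c') \<and> (\<forall>s\<in>S. dist (y' c) s = H c s)"
  proof -
    have "\<exists>y. \<forall>c\<in>C. (\<forall>c'\<in>C. dist (y c) (y c') = w c c') \<and> (\<forall>s\<in>S. dist (y c) s = H c s)"
    proof (rule realize[OF U fS fC])
      show "\<And>c. c \<in> C \<Longrightarrow> w c c = 0" "\<And>c c'. c \<in> C \<Longrightarrow> c' \<in> C \<Longrightarrow> 0 \<le> w c c'"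
        "\<And>c c'. c \<in> C \<Longrightarrow> c' \<in> C \<Longrightarrow> w c c' = w c' c"
        "\<And>c c' c''. c \<in> C \<Longrightarrow> c' \<in> C \<Longrightarrow> c'' \<in> C \<Longrightarrow> w c c'' \<le> w c c' + w c' c''"
        unfolding w_def by (auto simp: dist_commute dist_triangle)
      show "\<And>c s. c \<in> C \<Longrightarrow> s \<in> S \<Longrightarrow> 0 \<le> H c s"
      proof -
        fix c s assume cs: "c \<in> C" "s \<in> S"
        have "dist (y c) s \<le> M" using M3[of c s] cs S_def by auto
        then have "0 \<le> M" using zero_le_dist[of "y c" s] by linarith
        then show "0 \<le> H c s" unfolding H_def by (intro mincap_ge[OF fB]) auto
      qed
      show "\<And>c s s'. c \<in> C \<Longrightarrow> s \<in> S \<Longrightarrow> s' \<in> S \<Longrightarrow> H c s \<le> dist s s' + H c s'"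
        unfolding H_def using mincap_lip[OF fB] by (simp add: add.commute)
      show "\<And>c c' s. c \<in> C \<Longrightarrow> c' \<in> C \<Longrightarrow> s \<in> S \<Longrightarrow> H c s \<le> w c c' + H c' s"
      proof -
        fix c c' s assume "c \<in> C" "c' \<in> C" "s \<in> S"
        have "H c s - w c c' \<le> H c' s" unfolding H_def
        proof (rule mincap_ge[OF fB])
          show "mincap M B (dist (y c)) s - w c c' \<le> M"
            using mincap_le_M[OF fB, of M "dist (y c)" s] zero_le_dist[of "y c" "y c'"] unfolding w_def by linarith
          fix k assume "k \<in> B"
          then show "mincap M B (dist (y c)) s - w c c' \<le> dist (y c') k + dist k s"
            using mincap_le[OF fB, of k M "dist (y c)" s] dist_triangle[of "y c" k "y c'"] w_def
            by (simp add: dist_commute)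
        qed
        then show "H c s \<le> w c c' + H c' s" by simp
      qed
      show "\<And>c s s'. c \<in> C \<Longrightarrow> s \<in> S \<Longrightarrow> s' \<in> S \<Longrightarrow> dist s s' \<le> H c s + H c s'"
      proof -
        fix c s s' assume cs: "c \<in> C" "s \<in> S" "s' \<in> S"
        have "dist s s' - H c s' \<le> H c s" unfolding H_def
        proof (rule mincap_ge[OF fB])
          have "0 \<le> H c s'" using \<open>\<And>c s. c \<in> C \<Longrightarrow> s \<in> S \<Longrightarrow> 0 \<le> H c s\<close> cs by blast
          then show "dist s s' - mincap M B (dist (y c)) s' \<le> M" using M2 cs S_def H_def by fastforce
          fix k assume k: "k \<in> B"
          have "dist s s' - dist (y c) k - dist k s \<le> mincap M B (dist (y c)) s'"
          proof (rule mincap_ge[OF fB])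
            have "dist s s' \<le> M" using M2 cs S_def by auto
            then show "dist s s' - dist (y c) k - dist k s \<le> M" using zero_le_dist[of "y c" k] zero_le_dist[of k s] by linarith
            fix k' assume "k' \<in> B"
            have "dist s s' \<le> dist s k + dist k (y c) + dist (y c) k' + dist k' s'"
              using dist_triangle[of s s' k] dist_triangle[of k s' "y c"] dist_triangle[of "y c" s' k'] by linarith
            then show "dist s s' - dist (y c) k - dist k s \<le> dist (y c) k' + dist k' s'"
              by (simp add: dist_commute)
          qed
          then show "dist s s' - mincap M B (dist (y c)) s' \<le> dist (y c) k + dist k s" by simp
        qed
        then show "dist s s' \<le> H c s + H c s'" by simp
      qed
      show "\<And>c c' s. c \<in> C \<Longrightarrow> c' \<in> C \<Longrightarrow> s \<in> S \<Longrightarrow> w c c' \<le> H c s + H c' s"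
      proof -
        fix c c' s assume cs: "c \<in> C" "c' \<in> C" "s \<in> S"
        have H0: "0 \<le> H c' s" using \<open>\<And>c s. c \<in> C \<Longrightarrow> s \<in> S \<Longrightarrow> 0 \<le> H c s\<close> cs by blast
        have "w c c' - H c' s \<le> H c s" unfolding H_def
        proof (rule mincap_ge[OF fB])
          show "w c c' - mincap M B (dist (y c')) s \<le> M" using M1 cs H0 H_def w_def by fastforce
          fix k assume k: "k \<in> B"
          have "w c c' - dist (y c) k - dist k s \<le> mincap M B (dist (y c')) s"
          proof (rule mincap_ge[OF fB])
            have "w c c' \<le> M" using M1 cs w_def by fastforce
            then show "w c c' - dist (y c) k - dist k s \<le> M" using zero_le_dist[of "y c" k] zero_le_dist[of k s] by linarith
            fix k' assume "k' \<in> B"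
            have "dist (y c) (y c') \<le> dist (y c) k + dist k s + dist s k' + dist k' (y c')"
              using dist_triangle[of "y c" "y c'" k] dist_triangle[of k "y c'" s] dist_triangle[of s "y c'" k'] by linarith
            then show "w c c' - dist (y c) k - dist k s \<le> dist (y c') k' + dist k' s"
              by (simp add: dist_commute w_def)
          qed
          then show "w c c' - mincap M B (dist (y c')) s \<le> dist (y c) k + dist k s" by simp
        qed
        then show "w c c' \<le> H c s + H c' s" by simp
      qed
    qed
    then show ?thesis using that by blast
  qed
  define I where "I = (Inl ` B \<union> Inr ` C :: ('a + 'a) set)"
  have fI: "finite I" using fB fC I_def by simp
  obtain \<phi> where phi: "isometry \<phi>" "\<forall>i\<in>I. \<phi> (case_sum (\<lambda>b. b) y i) = case_sum (\<lambda>b. b) y' i"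
  proof -
    have "\<exists>h. isometry h \<and> (\<forall>i\<in>I. h (case_sum (\<lambda>b. b) y i) = case_sum (\<lambda>b. b) y' i)"
    proof (rule hom2[OF U fI])
      fix i j assume "i \<in> I" "j \<in> I"
      then show "dist (case_sum (\<lambda>b. b) y' i) (case_sum (\<lambda>b. b) y' j) = dist (case_sum (\<lambda>b. b) y i) (case_sum (\<lambda>b. b) y j)"
        unfolding I_def using y' HB S_def w_def by (auto simp: dist_commute)
    qed
    then show ?thesis using that by blast
  qed
  have pfix: "\<forall>b\<in>B. \<phi> b = b"
  proof
    fix b assume "b \<in> B" then have "Inl b \<in> I" using I_def by simp
    then show "\<phi> b = b" using phi(2) by fastforce
  qed
  have py: "\<phi> (y c) = y' c" if "c \<in> C" for c
  proof -
    have "Inr c \<in> I" using I_def that by simp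
    then show ?thesis using phi(2) by fastforce
  qed
  show ?thesis
  proof (intro bexI[of _ \<phi>] conjI ballI)
    show "\<phi> \<in> Iso_fix B" using phi(1) pfix unfolding Iso_fix_def by auto
    fix c z assume cz: "c \<in> C" "z \<in> A \<union> B"
    then show "dist (\<phi> (y c)) z \<le> M" using py y' S_def H_def mincap_le_M[OF fB] by auto
  next
    fix c a assume ca: "c \<in> C" "a \<in> A"
    have fD: "finite (A \<inter> B)" using fA by simp
    let ?F = "mincap M (A\<inter>B) (dist c)"
    have eq: "dist (\<phi> (y c)) a = H c a" using py y' S_def ca by auto
    show "min (?F a) (t + \<delta>) \<le> dist (\<phi> (y c)) a"
    proof (cases "a \<in> B")
      case True
      then have "H c a = dist c a" using HB yD ca by simp
      moreover have "?F a \<le> dist c a + dist a a" using mincap_le[OF fD, of a M "dist c" a] True ca by simp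
      ultimately show ?thesis using eq by simp
    next
      case False
      have "min (?F a) (t + \<delta>) \<le> H c a" unfolding H_def
      proof (rule mincap_ge[OF fB])
        show "min (?F a) (t + \<delta>) \<le> M" using mincap_le_M[OF fD] by (simp add: min.coboundedI1)
        fix b assume b: "b \<in> B"
        show "min (?F a) (t + \<delta>) \<le> dist (y c) b + dist b a"
        proof (cases "b \<in> A")
          case True
          then have "?F a \<le> dist c b + dist b a" using mincap_le[OF fD, of b M "dist c" a] b by simp
          then show ?thesis using yD[of c b] True b ca by (simp add: min.coboundedI1)
        next
          case False
          have d1: "\<delta> \<le> dist b a" using dl[of a b] False b ca \<open>a \<notin> B\<close> by (simp add: dist_commute)
          have lip: "?F a \<le> ?F b + dist a b" using mincap_lip[OF fD] .
          have "min (?F b) t \<le> dist (y c) b" using LB ca b by simp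
          then show ?thesis using d1 lip by (auto simp: min_def dist_commute split: if_splits)
        qed
      qed
      then show ?thesis using eq by simp
    qed
  qed
qed
lemma iso_dist: "isometry f \<Longrightarrow> dist (f x) (f y) = dist x y"
  unfolding isometry_def by blast

lemma fix_dist: "f \<in> Iso_fix S \<Longrightarrow> z \<in> S \<Longrightarrow> dist (f x) z = dist x z"
  unfolding Iso_fix_def using iso_dist by (metis (mono_tags, lifting) mem_Collect_eq)

lemma iterate:
  fixes A B C :: "'a::metric_space set"
  assumes U: "urysohn_space TYPE('a)" and fA: "finite A" and fB: "finite B" and fC: "finite C"
   and dpos: "\<delta> \<ge> 0"
   and dl: "\<And>a b. a \<in> A - B \<Longrightarrow> b \<in> B - A \<Longrightarrow> \<delta> \<le> dist a b"
   and r: "r \<in> Iso_fix (A\<inter>B)"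
   and M1: "\<And>c c'. c\<in>C \<Longrightarrow> c'\<in>C \<Longrightarrow> dist c c' \<le> M"
   and M2: "\<And>z z'. z\<in>A\<union>B \<Longrightarrow> z'\<in>A\<union>B \<Longrightarrow> dist z z' \<le> M"
   and M3: "\<And>c z. c\<in>C \<Longrightarrow> z\<in>A\<union>B \<Longrightarrow> dist (r c) z \<le> M"
  shows "\<exists>q\<in>gen_group (Iso_fix A \<union> Iso_fix B). \<forall>c\<in>C. \<forall>z\<in>A\<union>B.
           dist (q (r c)) z \<le> M \<and> min (mincap M (A\<inter>B) (dist c) z) (real k * \<delta>) \<le> dist (q (r c)) z"
proof (induction k)
  case 0
  show ?case
  proof (intro bexI[of _ id] ballI conjI)
    fix c z assume "c \<in> C" "z \<in> A \<union> B"
    then show "dist (id (r c)) z \<le> M" using M3 by simp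
    show "min (mincap M (A\<inter>B) (dist c) z) (real 0 * \<delta>) \<le> dist (id (r c)) z"
      by (simp add: min.coboundedI2)
  qed (rule gen_group.gen_id)
next
  case (Suc k)
  let ?G = "gen_group (Iso_fix A \<union> Iso_fix B)"
  obtain q where q: "q \<in> ?G" and qb: "\<forall>c\<in>C. \<forall>z\<in>A\<union>B.
           dist (q (r c)) z \<le> M \<and> min (mincap M (A\<inter>B) (dist c) z) (real k * \<delta>) \<le> dist (q (r c)) z"
    using Suc by blast
  have qD: "q \<in> Iso_fix (A \<inter> B)" using gen_fix[OF q] .
  have qi: "isometry q" "isometry r" using qD r unfolding Iso_fix_def by auto
  define y where "y c = q (r c)" for c
  have yM1: "dist (y c) (y c') \<le> M" if "c \<in> C" "c' \<in> C" for c c'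
    using M1 that iso_dist[OF qi(1)] iso_dist[OF qi(2)] y_def by simp
  have yD: "dist (y c) d = dist c d" if "c \<in> C" "d \<in> A \<inter> B" for c d
  proof -
    have "r d = d" using r that unfolding Iso_fix_def by auto
    then show ?thesis using fix_dist[OF qD that(2)] iso_dist[OF qi(2), of c d] y_def by simp
  qed
  obtain g1 where g1: "g1 \<in> Iso_fix B" and g1M: "\<forall>c\<in>C. \<forall>z\<in>A\<union>B. dist (g1 (y c)) z \<le> M"
    and g1L: "\<forall>c\<in>C. \<forall>a\<in>A. min (mincap M (A\<inter>B) (dist c) a) (real k * \<delta> + \<delta>) \<le> dist (g1 (y c)) a"
  proof -
    have yM3: "dist (y c) z \<le> M" if "c \<in> C" "z \<in> A \<union> B" for c z using qb that unfolding y_def by blast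
    have yL: "min (mincap M (A\<inter>B) (dist c) b) (real k * \<delta>) \<le> dist (y c) b" if "c \<in> C" "b \<in> B" for c b
      using qb that unfolding y_def by blast
    show ?thesis using half_step[OF U fA fB fC dl yM1 M2 yM3 yD yL] that by blast
  qed
  have g1i: "isometry g1" using g1 unfolding Iso_fix_def by auto
  define y1 where "y1 c = g1 (y c)" for c
  have dl': "\<delta> \<le> dist a b" if "a \<in> B - A" "b \<in> A - B" for a b
    using dl[of b a] that by (simp add: dist_commute)
  have y1M1: "dist (y1 c) (y1 c') \<le> M" if "c \<in> C" "c' \<in> C" for c c'
    using yM1 that iso_dist[OF g1i] y1_def by simp
  have M2': "dist z z' \<le> M" if "z \<in> B\<union>A" "z' \<in> B\<union>A" for z z' using M2 that by blast
  have y1M3: "dist (y1 c) z \<le> M" if "c \<in> C" "z \<in> B\<union>A" for c z using g1M that unfolding y1_def by blast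
  have y1D: "dist (y1 c) d = dist c d" if "c \<in> C" "d \<in> B \<inter> A" for c d
    using fix_dist[OF g1, of d] yD[of c d] that y1_def by auto
  have y1L: "min (mincap M (B\<inter>A) (dist c) b) (real k * \<delta>) \<le> dist (y1 c) b" if "c \<in> C" "b \<in> A" for c b
  proof -
    have "min (mincap M (A\<inter>B) (dist c) b) (real k * \<delta>) \<le> min (mincap M (A\<inter>B) (dist c) b) (real k * \<delta> + \<delta>)"
      using dpos by (simp add: min_def)
    moreover have "min (mincap M (A\<inter>B) (dist c) b) (real k * \<delta> + \<delta>) \<le> dist (y1 c) b"
      using g1L that unfolding y1_def by blast
    ultimately show ?thesis by (simp add: Int_commute)
  qed
  obtain g2 where g2: "g2 \<in> Iso_fix A" and g2M: "\<forall>c\<in>C. \<forall>z\<in>B\<union>A. dist (g2 (y1 c)) z \<le> M"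
    and g2L: "\<forall>c\<in>C. \<forall>a\<in>B. min (mincap M (B\<inter>A) (dist c) a) (real k * \<delta> + \<delta>) \<le> dist (g2 (y1 c)) a"
    using half_step[OF U fB fA fC dl' y1M1 M2' y1M3 y1D y1L] by blast
  show ?case
  proof (intro bexI[of _ "g2 \<circ> (g1 \<circ> q)"] ballI conjI)
    show "g2 \<circ> (g1 \<circ> q) \<in> ?G"
      using g1 g2 q by (meson UnI1 UnI2 gen_group.gen_comp gen_group.gen_in)
    fix c z assume cz: "c \<in> C" "z \<in> A \<union> B"
    show "dist ((g2 \<circ> (g1 \<circ> q)) (r c)) z \<le> M" using g2M cz y1_def y_def by auto
    have e: "real (Suc k) * \<delta> = real k * \<delta> + \<delta>" by (simp add: algebra_simps)
    show "min (mincap M (A\<inter>B) (dist c) z) (real (Suc k) * \<delta>) \<le> dist ((g2 \<circ> (g1 \<circ> q)) (r c)) z"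
    proof (cases "z \<in> A")
      case True
      then show ?thesis using fix_dist[OF g2 True, of "y1 c"] g1L cz y1_def y_def e by simp
    next
      case False
      then have "z \<in> B" using cz by simp
      then show ?thesis using g2L cz y1_def y_def e by (simp add: Int_commute)
    qed
  qed
qed
lemma exact:
  assumes fD: "finite (A\<inter>B)" and q: "q \<in> Iso_fix (A\<inter>B)" and r: "r \<in> Iso_fix (A\<inter>B)"
    and b1: "dist (q (r c)) z \<le> M"
    and b2: "min (mincap M (A\<inter>B) (dist c) z) (real k * \<delta>) \<le> dist (q (r c)) z"
    and Mk: "M \<le> real k * \<delta>"
  shows "dist (q (r c)) z = mincap M (A\<inter>B) (dist c) z"
proof (rule antisym)
  have "mincap M (A\<inter>B) (dist c) z \<le> real k * \<delta>" using mincap_le_M[OF fD, of M "dist c" z] Mk by linarith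
  then show "mincap M (A\<inter>B) (dist c) z \<le> dist (q (r c)) z" using b2 by (simp add: min_def split: if_splits)
  show "dist (q (r c)) z \<le> mincap M (A\<inter>B) (dist c) z"
  proof (rule mincap_ge[OF fD b1])
    fix d assume d: "d \<in> A \<inter> B"
    have "dist (q (r c)) d = dist c d" using fix_dist[OF q d] fix_dist[OF r d] by simp
    then show "dist (q (r c)) z \<le> dist c d + dist d z" using dist_triangle[of "q (r c)" z d] by simp
  qed
qed

theorem theorem4p16:
  fixes A B C :: "'a::metric_space set"
  assumes "urysohn_space TYPE('a)"
    and "finite A" and "finite B" and "finite C"
    and "p \<in> Iso_fix (A \<inter> B)"
  shows "\<exists>q \<in> gen_group (Iso_fix A \<union> Iso_fix B). \<forall>x\<in>C. q x = p x"
proof -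
  note U = assms(1) and fA = assms(2) and fB = assms(3) and fC = assms(4) and pF = assms(5)
  let ?G = "gen_group (Iso_fix A \<union> Iso_fix B)"
  have fD: "finite (A \<inter> B)" using fA by simp
  define P where "P = A \<union> B \<union> C \<union> p ` C"
  have fP: "finite P" using fA fB fC P_def by simp
  define M where "M = Max (insert 0 ((\<lambda>(x,y). dist x y) ` (P \<times> P)))"
  have Mb: "dist x y \<le> M" if "x \<in> P" "y \<in> P" for x y
  proof -
    have "dist x y \<in> insert 0 ((\<lambda>(x,y). dist x y) ` (P \<times> P))" using that by force
    then show ?thesis unfolding M_def using fP by simp
  qed
  define \<delta> where "\<delta> = Min (insert 1 ((\<lambda>(a,b). dist a b) ` ((A-B) \<times> (B-A))))"
  have dpos: "\<delta> > 0" unfolding \<delta>_def using fA fB by (auto simp: Min_gr_iff)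
  have dl: "\<delta> \<le> dist a b" if "a \<in> A - B" "b \<in> B - A" for a b
  proof -
    have "dist a b \<in> insert 1 ((\<lambda>(a,b). dist a b) ` ((A-B) \<times> (B-A)))" using that by force
    then show ?thesis unfolding \<delta>_def using fA fB by simp
  qed
  obtain k :: nat where "M / \<delta> \<le> real k" using real_arch_simple by blast
  then have Mk: "M \<le> real k * \<delta>" using dpos by (simp add: divide_le_eq)
  have idF: "id \<in> Iso_fix (A \<inter> B)" unfolding Iso_fix_def isometry_def by simp
  have M1: "dist c c' \<le> M" if "c \<in> C" "c' \<in> C" for c c' using that by (intro Mb) (auto simp: P_def)
  have M2: "dist z z' \<le> M" if "z \<in> A \<union> B" "z' \<in> A \<union> B" for z z' using that by (intro Mb) (auto simp: P_def)
  have M3a: "dist (id c) z \<le> M" if "c \<in> C" "z \<in> A \<union> B" for c z using that by (intro Mb) (auto simp: P_def)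
  have M3b: "dist (p c) z \<le> M" if "c \<in> C" "z \<in> A \<union> B" for c z using that by (intro Mb) (auto simp: P_def)
  obtain q1 where q1: "q1 \<in> ?G" and q1b: "\<forall>c\<in>C. \<forall>z\<in>A\<union>B.
           dist (q1 (id c)) z \<le> M \<and> min (mincap M (A\<inter>B) (dist c) z) (real k * \<delta>) \<le> dist (q1 (id c)) z"
    using iterate[OF U fA fB fC _ dl idF M1 M2 M3a, of k] dpos by auto
  obtain q2 where q2: "q2 \<in> ?G" and q2b: "\<forall>c\<in>C. \<forall>z\<in>A\<union>B.
           dist (q2 (p c)) z \<le> M \<and> min (mincap M (A\<inter>B) (dist c) z) (real k * \<delta>) \<le> dist (q2 (p c)) z"
    using iterate[OF U fA fB fC _ dl pF M1 M2 M3b, of k] dpos by auto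
  have q1F: "q1 \<in> Iso_fix (A \<inter> B)" and q2F: "q2 \<in> Iso_fix (A \<inter> B)" using gen_fix q1 q2 by auto
  have e1: "dist (q1 c) z = mincap M (A\<inter>B) (dist c) z" if "c \<in> C" "z \<in> A \<union> B" for c z
    using exact[OF fD q1F idF _ _ Mk] q1b that by simp
  have e2: "dist (q2 (p c)) z = mincap M (A\<inter>B) (dist c) z" if "c \<in> C" "z \<in> A \<union> B" for c z
    using exact[OF fD q2F pF _ _ Mk] q2b that by simp
  have i1: "isometry q1" "isometry q2" "isometry p" using q1F q2F pF unfolding Iso_fix_def by auto
  define I where "I = (Inl ` (A \<union> B) \<union> Inr ` C :: ('a + 'a) set)"
  have fI: "finite I" using fA fB fC I_def by simp
  obtain s where s: "isometry s" "\<forall>i\<in>I. s (case_sum (\<lambda>b. b) q1 i) = case_sum (\<lambda>b. b) (\<lambda>c. q2 (p c)) i"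
  proof -
    have "\<exists>h. isometry h \<and> (\<forall>i\<in>I. h (case_sum (\<lambda>b. b) q1 i) = case_sum (\<lambda>b. b) (\<lambda>c. q2 (p c)) i)"
    proof (rule hom2[OF U fI])
      fix i j assume "i \<in> I" "j \<in> I"
      then show "dist (case_sum (\<lambda>b. b) (\<lambda>c. q2 (p c)) i) (case_sum (\<lambda>b. b) (\<lambda>c. q2 (p c)) j) =
                 dist (case_sum (\<lambda>b. b) q1 i) (case_sum (\<lambda>b. b) q1 j)"
        unfolding I_def using e1 e2 iso_dist[OF i1(1)] iso_dist[OF i1(2)] iso_dist[OF i1(3)]
        by (auto simp: dist_commute)
    qed
    then show ?thesis using that by blast
  qed
  have sA: "s \<in> Iso_fix A"
  proof -
    have "\<forall>z\<in>A. s z = z"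
    proof
      fix z assume "z \<in> A" then have "Inl z \<in> I" using I_def by simp
      then show "s z = z" using s(2) by fastforce
    qed
    then show ?thesis using s(1) unfolding Iso_fix_def by simp
  qed
  have sq: "s (q1 c) = q2 (p c)" if "c \<in> C" for c
  proof -
    have "Inr c \<in> I" using I_def that by simp
    then show ?thesis using s(2) by fastforce
  qed
  have bq2: "bij q2" using i1(2) unfolding isometry_def by simp
  show ?thesis
  proof (intro bexI[of _ "inv q2 \<circ> (s \<circ> q1)"] ballI)
    fix x assume "x \<in> C"
    then show "(inv q2 \<circ> (s \<circ> q1)) x = p x" using sq bq2 by (simp add: bij_is_inj)
  next
    show "inv q2 \<circ> (s \<circ> q1) \<in> ?G"
      using gen_inv_closed[OF q2] sA q1 by (meson UnI1 gen_group.gen_comp gen_group.gen_in)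
  qed
qed

end
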